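(* Let $n,m\ge 2$ be integers and $P_n,P_m$ paths on $n$ and $m$ vertices. Then $AT(P_n+_R P_m)=3$.
   Context: For an orientation $D$, a subdigraph is Eulerian if every vertex has equal in- and outdegree in it; $D$ is an AT-orientation if the numbers of Eulerian subgraphs with an even and with an odd number of arcs differ; $AT(G)$ is the smallest $k$ such that $G$ has an AT-orientation of maximum outdegree at most $k-1$. $R(G)$ has vertex set $V(G)\cup E(G)$ and consists of $G$ together with, for each edge $e=xy$, a new vertex $e$ adjacent to $x$ and $y$. $G+_R H$ has vertex set $(V(G)\cup E(G))\times V(H)$, with $(u_1,u_2)\sim(v_1,v_2)$ iff [$u_1=v_1\in V(G)$ and $u_2v_2\in E(H)$] or [$u_2=v_2$ and $u_1v_1\in E(R(G))$]. *)

theory Defs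
  imports Main
begin

definition is_graph :: "'v set \<Rightarrow> 'v set set \<Rightarrow> bool" where
  "is_graph V E \<longleftrightarrow> finite V \<and> (\<forall>e\<in>E. \<exists>x y. x \<in> V \<and> y \<in> V \<and> x \<noteq> y \<and> e = {x, y})"

definition is_orientation :: "'v set \<Rightarrow> 'v set set \<Rightarrow> ('v \<times> 'v) set \<Rightarrow> bool" where
  "is_orientation V E A \<longleftrightarrow>
     (\<forall>(x, y)\<in>A. x \<noteq> y \<and> {x, y} \<in> E) \<and>
     (\<forall>e\<in>E. \<exists>!a. a \<in> A \<and> {fst a, snd a} = e)"

definition outdeg :: "('v \<times> 'v) set \<Rightarrow> 'v \<Rightarrow> nat" where
  "outdeg A v = card {w. (v, w) \<in> A}"

definition indeg :: "('v \<times> 'v) set \<Rightarrow> 'v \<Rightarrow> nat" where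
  "indeg A v = card {w. (w, v) \<in> A}"

definition eulerian :: "('v \<times> 'v) set \<Rightarrow> bool" where
  "eulerian S \<longleftrightarrow> (\<forall>v. indeg S v = outdeg S v)"

definition AT_orientation :: "('v \<times> 'v) set \<Rightarrow> bool" where
  "AT_orientation A \<longleftrightarrow>
     card {S. S \<subseteq> A \<and> eulerian S \<and> even (card S)}
       \<noteq> card {S. S \<subseteq> A \<and> eulerian S \<and> odd (card S)}"

definition AT :: "'v set \<Rightarrow> 'v set set \<Rightarrow> nat" where
  "AT V E = (LEAST k. \<exists>A. is_orientation V E A \<and> AT_orientation A \<and>
                         (\<forall>v\<in>V. outdeg A v + 1 \<le> k))"

text \<open>R(G): vertex set V(G) \<union> E(G) (as a disjoint sum), G plus, for each edge
e = xy, a new vertex e adjacent to x and y.\<close>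

definition R_verts :: "'v set \<Rightarrow> 'v set set \<Rightarrow> ('v + 'v set) set" where
  "R_verts V E = Inl ` V \<union> Inr ` E"

definition R_edges :: "'v set \<Rightarrow> 'v set set \<Rightarrow> ('v + 'v set) set set" where
  "R_edges V E = {{Inl x, Inl y} | x y. {x, y} \<in> E}
                 \<union> {{Inl x, Inr e} | x e. e \<in> E \<and> x \<in> e}"

definition RP_verts :: "'v set \<Rightarrow> 'v set set \<Rightarrow> 'w set \<Rightarrow> (('v + 'v set) \<times> 'w) set" where
  "RP_verts VG EG VH = R_verts VG EG \<times> VH"

definition RP_edges :: "'v set \<Rightarrow> 'v set set \<Rightarrow> 'w set \<Rightarrow> 'w set set
                        \<Rightarrow> (('v + 'v set) \<times> 'w) set set" where
  "RP_edges VG EG VH EH =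
     {{(Inl u, a), (Inl u, b)} | u a b. u \<in> VG \<and> {a, b} \<in> EH}
     \<union> {{(p, c), (q, c)} | p q c. c \<in> VH \<and> {p, q} \<in> R_edges VG EG}"

definition path_verts :: "nat \<Rightarrow> nat set" where
  "path_verts n = {0..<n}"

definition path_edges :: "nat \<Rightarrow> nat set set" where
  "path_edges n = {{i, Suc i} | i. Suc i < n}"

end

theory Submission imports Defs begin

lemma pe: "{x,y} \<in> path_edges n \<Longrightarrow> (y = Suc x \<or> x = Suc y) \<and> x < n \<and> y < n"
  unfolding path_edges_def by (auto simp: doubleton_eq_iff)

lemma pe_mem: "e \<in> path_edges n \<Longrightarrow> \<exists>k. e = {k, Suc k} \<and> Suc k < n"
  unfolding path_edges_def by auto

lemma pe_elt: "e \<in> path_edges n \<Longrightarrow> x \<in> e \<Longrightarrow> x < n"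
  unfolding path_edges_def by auto

lemma re: assumes "{p,q} \<in> R_edges VG EG" shows "(\<exists>x y. p=Inl x \<and> q=Inl y \<and> {x,y}\<in>EG)
   \<or> (\<exists>x e. p = Inl x \<and> q = Inr e \<and> e\<in>EG \<and> x\<in>e) \<or> (\<exists>x e. p=Inr e \<and> q = Inl x \<and> e\<in>EG \<and> x\<in>e)"
proof -
  from assms consider (a) x y where "{p,q} = {Inl x, Inl y}" "{x,y}\<in>EG"
    | (b) x e where "{p,q} = {Inl x, Inr e}" "e\<in>EG" "x\<in>e"
    unfolding R_edges_def by blast
  then show ?thesis
  proof cases
    case a
    then have "(p = Inl x \<and> q = Inl y) \<or> (p = Inl y \<and> q = Inl x)" by (simp add: doubleton_eq_iff)
    moreover have "{y,x} \<in> EG" using a by (simp add: insert_commute)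
    ultimately show ?thesis using a by blast
  next
    case b
    then have "(p = Inl x \<and> q = Inr e) \<or> (p = Inr e \<and> q = Inl x)" by (simp add: doubleton_eq_iff)
    then show ?thesis using b by blast
  qed
qed

lemma nbr: assumes "{v,w} \<in> RP_edges VG EG VH EH" shows
   "(\<exists>u a b. v = (Inl u,a) \<and> w = (Inl u,b) \<and> u\<in>VG \<and> {a,b}\<in>EH) \<or>
   (\<exists>p q c. v=(p,c) \<and> w=(q,c) \<and> c\<in>VH \<and> {p,q}\<in>R_edges VG EG)"
proof -
  from assms consider (a) u a b where "{v,w} = {(Inl u,a),(Inl u,b)}" "u\<in>VG" "{a,b}\<in>EH"
    | (b) p q c where "{v,w} = {(p,c),(q,c)}" "c\<in>VH" "{p,q}\<in>R_edges VG EG"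
    unfolding RP_edges_def by blast
  then show ?thesis
  proof cases
    case a
    then have "(v = (Inl u,a) \<and> w = (Inl u,b)) \<or> (v = (Inl u,b) \<and> w = (Inl u,a))" by (simp add: doubleton_eq_iff)
    moreover have "{b,a} \<in> EH" using a by (simp add: insert_commute)
    ultimately show ?thesis using a by blast
  next
    case b
    then have "(v = (p,c) \<and> w = (q,c)) \<or> (v = (q,c) \<and> w = (p,c))" by (simp add: doubleton_eq_iff)
    moreover have "{q,p} \<in> R_edges VG EG" using b by (simp add: insert_commute)
    ultimately show ?thesis using b by blast
  qed
qed

lemma E_col: "u < n \<Longrightarrow> Suc a < m \<Longrightarrow> {(Inl u, a), (Inl u, Suc a)} \<in> RP_edges (path_verts n) (path_edges n) (path_verts m) (path_edges m)"
  unfolding RP_edges_def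
  apply (rule UnI1)
  apply (rule CollectI)
  apply (rule exI[of _ u], rule exI[of _ a], rule exI[of _ "Suc a"])
  by (auto simp: path_verts_def path_edges_def)

lemma E_row: "Suc i < n \<Longrightarrow> c < m \<Longrightarrow> {(Inl i, c), (Inl (Suc i), c)} \<in> RP_edges (path_verts n) (path_edges n) (path_verts m) (path_edges m)"
  unfolding RP_edges_def
  apply (rule UnI2)
  apply (rule CollectI)
  apply (rule exI[of _ "Inl i"], rule exI[of _ "Inl (Suc i)"], rule exI[of _ c])
  by (auto simp: path_verts_def path_edges_def R_edges_def)

lemma R_tri: "e \<in> EG \<Longrightarrow> x \<in> e \<Longrightarrow> {Inl x, Inr e} \<in> R_edges VG EG"
  unfolding R_edges_def by blast

lemma pe_in: "Suc i < n \<Longrightarrow> {i, Suc i} \<in> path_edges n"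
  unfolding path_edges_def by blast

lemma E_tri: "Suc i < n \<Longrightarrow> c < m \<Longrightarrow> x \<in> {i, Suc i} \<Longrightarrow> {(Inl x, c), (Inr {i, Suc i}, c)} \<in> RP_edges (path_verts n) (path_edges n) (path_verts m) (path_edges m)"
  unfolding RP_edges_def
  apply (rule UnI2)
  apply (rule CollectI)
  apply (rule exI[of _ "Inl x"], rule exI[of _ "Inr {i, Suc i}"], rule exI[of _ c])
  by (simp add: path_verts_def R_tri pe_in)

lemma edges_sub: "e \<in> RP_edges (path_verts n) (path_edges n) (path_verts m) (path_edges m) \<Longrightarrow>
   e \<subseteq> RP_verts (path_verts n) (path_edges n) (path_verts m)"
proof
  fix z assume e: "e \<in> RP_edges (path_verts n) (path_edges n) (path_verts m) (path_edges m)" and z: "z \<in> e"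
  from e consider (a) u a b where "e = {(Inl u,a),(Inl u,b)}" "u\<in>path_verts n" "{a,b}\<in>path_edges m"
    | (b) p q c where "e = {(p,c),(q,c)}" "c\<in>path_verts m" "{p,q}\<in>R_edges (path_verts n) (path_edges n)"
    unfolding RP_edges_def by blast
  then show "z \<in> RP_verts (path_verts n) (path_edges n) (path_verts m)"
  proof cases
    case a
    then show ?thesis using z pe[OF a(3)] unfolding RP_verts_def R_verts_def path_verts_def by auto
  next
    case b
    have "p \<in> R_verts (path_verts n) (path_edges n) \<and> q \<in> R_verts (path_verts n) (path_edges n)"
      using re[OF b(3)] unfolding R_verts_def path_verts_def by (auto dest: pe pe_elt)
    then show ?thesis using z b unfolding RP_verts_def by auto
  qed
qed


lemma fin_pe: "finite (path_edges n)"
proof -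
  have "path_edges n = (\<lambda>i. {i, Suc i}) ` {i. Suc i < n}" unfolding path_edges_def by auto
  moreover have "finite {i. Suc i < n}" by (rule finite_subset[of _ "{..<n}"]) auto
  ultimately show ?thesis by simp
qed

lemma fin_V: "finite (RP_verts (path_verts n) (path_edges n) (path_verts m))"
  unfolding RP_verts_def R_verts_def path_verts_def using fin_pe by simp

lemma orient_dir: "is_orientation V E A \<Longrightarrow> {x,y} \<in> E \<Longrightarrow> (x,y)\<in>A \<or> (y,x)\<in>A"
proof -
  assume o: "is_orientation V E A" and e: "{x,y} \<in> E"
  have "\<exists>!a. a \<in> A \<and> {fst a, snd a} = {x,y}" using o e unfolding is_orientation_def by simp
  then obtain a where a: "a\<in>A" "{fst a, snd a} = {x,y}" by (meson ex1_implies_ex)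
  then have "(fst a = x \<and> snd a = y) \<or> (fst a = y \<and> snd a = x)" by (simp add: doubleton_eq_iff)
  then show ?thesis using a(1) by (cases a) auto
qed

lemma two_out: "finite {w. (v,w)\<in>A} \<Longrightarrow> (v,w1)\<in>A \<Longrightarrow> (v,w2)\<in>A \<Longrightarrow> w1\<noteq>w2 \<Longrightarrow> 2 \<le> outdeg A v"
proof -
  assume f: "finite {w. (v,w)\<in>A}" and h: "(v,w1)\<in>A" "(v,w2)\<in>A" "w1\<noteq>w2"
  have "card {w1,w2} \<le> card {w. (v,w)\<in>A}" by (rule card_mono[OF f]) (use h in auto)
  then show ?thesis using h(3) unfolding outdeg_def by simp
qed

lemma tri: assumes o: "is_orientation V E A" and f: "\<And>v. finite {w. (v,w)\<in>A}"
  and e: "{a,b}\<in>E" "{a,t}\<in>E" "{b,t}\<in>E" and d: "a\<noteq>b" "a\<noteq>t" "b\<noteq>t"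
  and x: "(a,x)\<in>A" "x\<noteq>b" "x\<noteq>t"
 shows "\<exists>v\<in>{a,b,t}. 2 \<le> outdeg A v"
proof -
  note D = orient_dir[OF o]
  show ?thesis
  proof (cases "(a,b)\<in>A")
    case True then show ?thesis using two_out[OF f x(1) True x(2)] by blast
  next
    case nab: False
    show ?thesis
    proof (cases "(a,t)\<in>A")
      case True then show ?thesis using two_out[OF f x(1) True x(3)] by blast
    next
      case nat: False
      have ba: "(b,a)\<in>A" using D[OF e(1)] nab by blast
      have ta: "(t,a)\<in>A" using D[OF e(2)] nat by blast
      show ?thesis
      proof (cases "(b,t)\<in>A")
        case True then show ?thesis using two_out[OF f ba True d(2)] by blast
      next
        case False
        then have "(t,b)\<in>A" using D[OF e(3)] by blast
        then show ?thesis using two_out[OF f ta _ d(1)] by blast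
      qed
    qed
  qed
qed

lemma uniq_dir: assumes lt: "r y < (r x::nat)" and xy: "{x,y} \<in> E"
  shows "\<exists>!a. a \<in> {(x,y). {x,y}\<in>E \<and> r y < r x} \<and> {fst a, snd a} = {x,y}"
proof (rule ex1I[of _ "(x,y)"])
  show "(x,y) \<in> {(x,y). {x,y}\<in>E \<and> r y < r x} \<and> {fst (x,y), snd (x,y)} = {x,y}" using lt xy by simp
  fix a assume a: "a \<in> {(x,y). {x,y}\<in>E \<and> r y < r x} \<and> {fst a, snd a} = {x,y}"
  obtain a1 a2 where a12: "a = (a1,a2)" by (cases a)
  have "r a2 < r a1" "{a1,a2} = {x,y}" using a a12 by auto
  then have "(a1 = x \<and> a2 = y) \<or> (a1 = y \<and> a2 = x)" by (simp add: doubleton_eq_iff)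
  then show "a = (x,y)" using a12 lt \<open>r a2 < r a1\<close> by auto
qed

lemma rank_orient: assumes h1: "\<forall>e\<in>E. \<exists>x y. e = {x,y}" and h2: "\<forall>x y. {x,y}\<in>E \<longrightarrow> r x \<noteq> (r y::nat)"
 shows "is_orientation V E {(x,y). {x,y}\<in>E \<and> r y < r x}"
  unfolding is_orientation_def
proof (intro conjI)
  show "\<forall>(x,y)\<in>{(x,y). {x,y}\<in>E \<and> r y < r x}. x\<noteq>y \<and> {x,y}\<in>E" by auto
  show "\<forall>e\<in>E. \<exists>!a. a \<in> {(x,y). {x,y}\<in>E \<and> r y < r x} \<and> {fst a, snd a} = e"
  proof
  fix e assume eE: "e\<in>E"
  obtain x y where e: "e = {x,y}" using h1 eE by blast
  have ne: "r x \<noteq> r y" using h2 eE e by blast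
  show "\<exists>!a. a \<in> {(x,y). {x,y}\<in>E \<and> r y < r x} \<and> {fst a, snd a} = e"
  proof (cases "r y < r x")
    case True
    show ?thesis using uniq_dir[of r y x E, OF True] e eE by simp
  next
    case False
    then have "r x < r y" using ne by simp
    moreover have "e = {y,x}" using e by (simp add: insert_commute)
    ultimately show ?thesis using uniq_dir[of r x y E] eE by simp
  qed
  qed
qed

lemma acyc_AT: assumes fin: "finite A" and dec: "\<forall>(x,y)\<in>A. r y < (r x::nat)" shows "AT_orientation A"
proof -
  have key: "S = {}" if "S \<subseteq> A" "eulerian S" for S
  proof (rule ccontr)
    assume ne: "S \<noteq> {}"
    have fS: "finite S" using fin that(1) finite_subset by blast
    let ?R = "r ` fst ` S"
    have fR: "finite ?R" and neR: "?R \<noteq> {}" using fS ne by auto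
    from Max_in[OF fR neR] obtain x where x: "x \<in> fst ` S" "r x = Max ?R" by (metis imageE)
    then obtain y where xy: "(x,y) \<in> S" by force
    have "{w. (x,w) \<in> S} \<subseteq> snd ` S" by force
    hence "finite {w. (x,w) \<in> S}" using fS finite_subset by blast
    moreover have "{w. (x,w) \<in> S} \<noteq> {}" using xy by blast
    ultimately have "outdeg S x > 0" unfolding outdeg_def using card_gt_0_iff by blast
    hence "indeg S x > 0" using that(2) unfolding eulerian_def by simp
    hence "{w. (w,x) \<in> S} \<noteq> {}" unfolding indeg_def by (metis card.empty less_irrefl)
    then obtain w where wx: "(w,x) \<in> S" by blast
    then have "r x < r w" using dec that(1) by auto
    moreover have "r w \<in> ?R" using wx by force
    ultimately show False using x Max_ge[OF fR] by fastforce
  qed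
  have eu0: "eulerian {}" by (simp add: eulerian_def indeg_def outdeg_def)
  have ev0: "even (card {})" by simp
  have "{S. S \<subseteq> A \<and> eulerian S \<and> even (card S)} \<subseteq> {{}}" using key by blast
  moreover have "{} \<in> {S. S \<subseteq> A \<and> eulerian S \<and> even (card S)}" using eu0 by simp
  ultimately have h1: "{S. S \<subseteq> A \<and> eulerian S \<and> even (card S)} = {{}}" by blast
  have h2: "{S. S \<subseteq> A \<and> eulerian S \<and> odd (card S)} = {}"
  proof -
    have False if "S \<subseteq> A" "eulerian S" "odd (card S)" for S
      using key[OF that(1,2)] that(3) by simp
    then show ?thesis by blast
  qed
  show ?thesis unfolding AT_orientation_def h1 h2 by simp
qed


abbreviation GV :: "nat \<Rightarrow> nat \<Rightarrow> ((nat + nat set) \<times> nat) set" where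
  "GV n m \<equiv> RP_verts (path_verts n) (path_edges n) (path_verts m)"
abbreviation GE :: "nat \<Rightarrow> nat \<Rightarrow> ((nat + nat set) \<times> nat) set set" where
  "GE n m \<equiv> RP_edges (path_verts n) (path_edges n) (path_verts m) (path_edges m)"

lemma nbr_Inr: assumes "{(Inr e, c), w} \<in> GE n m" shows "\<exists>x. w = (Inl x, c) \<and> e \<in> path_edges n \<and> x \<in> e"
  using nbr[OF assms]
proof
  assume "\<exists>u a b. (Inr e, c) = (Inl u,a) \<and> w = (Inl u,b) \<and> u\<in>path_verts n \<and> {a,b}\<in>path_edges m"
  then show ?thesis by auto
next
  assume "\<exists>p q c'. (Inr e, c) = (p,c') \<and> w = (q,c') \<and> c' \<in> path_verts m \<and> {p,q}\<in>R_edges (path_verts n) (path_edges n)"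
  then obtain q where h: "w = (q,c)" "{Inr e, q} \<in> R_edges (path_verts n) (path_edges n)" by auto
  from re[OF h(2)] h(1) show ?thesis by auto
qed

lemma nbr_Inl: assumes "{(Inl i, c), w} \<in> GE n m" shows
  "(\<exists>b. w = (Inl i, b) \<and> {c,b} \<in> path_edges m) \<or> (\<exists>y. w = (Inl y, c) \<and> {i,y} \<in> path_edges n)
   \<or> (\<exists>e. w = (Inr e, c) \<and> e \<in> path_edges n \<and> i \<in> e \<and> c < m)"
  using nbr[OF assms]
proof
  assume "\<exists>u a b. (Inl i, c) = (Inl u,a) \<and> w = (Inl u,b) \<and> u\<in>path_verts n \<and> {a,b}\<in>path_edges m"
  then show ?thesis by auto
next
  assume "\<exists>p q c'. (Inl i, c) = (p,c') \<and> w = (q,c') \<and> c' \<in> path_verts m \<and> {p,q}\<in>R_edges (path_verts n) (path_edges n)"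
  then obtain q where h: "w = (q,c)" "{Inl i, q} \<in> R_edges (path_verts n) (path_edges n)" "c < m"
    by (auto simp: path_verts_def)
  from re[OF h(2)] h(1,3) show ?thesis by auto
qed

definition rk :: "nat \<Rightarrow> nat \<Rightarrow> (nat + nat set) \<times> nat \<Rightarrow> nat" where
  "rk n m v = (case fst v of Inl i \<Rightarrow> i + snd v | Inr _ \<Rightarrow> n + m)"

lemma rk_ne: assumes E: "{v,w} \<in> GE n m" shows "rk n m v \<noteq> rk n m w"
proof -
  obtain p c where v: "v = (p,c)" by (cases v)
  show ?thesis
  proof (cases p)
    case (Inl i)
    from nbr_Inl[of i c w n m] E v Inl show ?thesis
      by (auto simp: rk_def dest: pe pe_elt)
  next
    case (Inr e)
    from nbr_Inr[of e c w n m] E v Inr obtain x where "w = (Inl x, c)" "e \<in> path_edges n" "x \<in> e" by auto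
    moreover have "c < m" using E edges_sub[OF E] v unfolding RP_verts_def path_verts_def by auto
    ultimately show ?thesis using v Inr by (auto simp: rk_def dest: pe_elt)
  qed
qed

lemma card2: "S \<subseteq> {p,q} \<Longrightarrow> card S \<le> 2"
proof -
  assume "S \<subseteq> {p,q}"
  then have "card S \<le> card {p,q}" by (rule card_mono[rotated]) simp
  also have "\<dots> \<le> 2" by (cases "p = q") auto
  finally show ?thesis .
qed

lemma out_le2: "card {w. {v,w} \<in> GE n m \<and> rk n m w < rk n m v} \<le> 2"
proof -
  obtain p c where v: "v = (p,c)" by (cases v)
  show ?thesis
  proof (cases p)
    case (Inl i)
    have "{w. {v,w} \<in> GE n m \<and> rk n m w < rk n m v} \<subseteq> {(Inl i, c - 1), (Inl (i - 1), c)}"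
    proof
      fix w assume "w \<in> {w. {v,w} \<in> GE n m \<and> rk n m w < rk n m v}"
      hence E: "{(Inl i, c),w} \<in> GE n m" and lt: "rk n m w < rk n m (Inl i, c)" using v Inl by auto
      from nbr_Inl[OF E] lt show "w \<in> {(Inl i, c - 1), (Inl (i - 1), c)}"
        by (auto simp: rk_def dest: pe pe_elt)
    qed
    then show ?thesis by (rule card2)
  next
    case (Inr e)
    show ?thesis
    proof (cases "{w. {v,w} \<in> GE n m \<and> rk n m w < rk n m v} = {}")
      case True show ?thesis unfolding True by simp
    next
      case False
      then obtain w0 where "{(Inr e, c),w0} \<in> GE n m" using v Inr by auto
      from nbr_Inr[OF this] have "e \<in> path_edges n" by auto
      then obtain k where k: "e = {k, Suc k}" using pe_mem by blast
      have "{w. {v,w} \<in> GE n m \<and> rk n m w < rk n m v} \<subseteq> {(Inl k, c), (Inl (Suc k), c)}"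
      proof
        fix w assume "w \<in> {w. {v,w} \<in> GE n m \<and> rk n m w < rk n m v}"
        hence E: "{(Inr e, c),w} \<in> GE n m" using v Inr by auto
        from nbr_Inr[OF E] k show "w \<in> {(Inl k, c), (Inl (Suc k), c)}" by auto
      qed
      then show ?thesis by (rule card2)
    qed
  qed
qed


lemma orient_E: "is_orientation V E A \<Longrightarrow> (x,y) \<in> A \<Longrightarrow> {x,y} \<in> E"
  unfolding is_orientation_def by blast

lemma lower: assumes n: "2 \<le> n" and m: "2 \<le> m" and o: "is_orientation (GV n m) (GE n m) A"
  shows "\<exists>v\<in>GV n m. 2 \<le> outdeg A v"
proof -
  have f: "finite {w. (v,w)\<in>A}" for v
  proof -
    have "{w. (v,w)\<in>A} \<subseteq> GV n m"
    proof
      fix w assume "w \<in> {w. (v,w)\<in>A}"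
      then have "{v,w} \<in> GE n m" using orient_E[OF o] by blast
      then show "w \<in> GV n m" using edges_sub by blast
    qed
    then show ?thesis using fin_V finite_subset by blast
  qed
  have n1: "Suc 0 < n" "Suc 0 < m" "0 < m" using n m by auto
  have eab0: "{(Inl 0,0),(Inl (Suc 0),0)} \<in> GE n m" by (rule E_row) (use n1 in auto)
  have eat0: "{(Inl 0,0),(Inr {0, Suc 0},0)} \<in> GE n m" by (rule E_tri) (use n1 in auto)
  have ebt0: "{(Inl (Suc 0),0),(Inr {0, Suc 0},0)} \<in> GE n m" by (rule E_tri) (use n1 in auto)
  have eab1: "{(Inl 0,Suc 0),(Inl (Suc 0),Suc 0)} \<in> GE n m" by (rule E_row) (use n1 in auto)
  have eat1: "{(Inl 0,Suc 0),(Inr {0, Suc 0},Suc 0)} \<in> GE n m" by (rule E_tri) (use n1 in auto)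
  have ebt1: "{(Inl (Suc 0),Suc 0),(Inr {0, Suc 0},Suc 0)} \<in> GE n m" by (rule E_tri) (use n1 in auto)
  have eaa: "{(Inl 0,0),(Inl 0,Suc 0)} \<in> GE n m" by (rule E_col) (use n1 in auto)
  have inV: "(Inl 0,0) \<in> GV n m" "(Inl (Suc 0),0) \<in> GV n m" "(Inr {0, Suc 0},0) \<in> GV n m"
     "(Inl 0,Suc 0) \<in> GV n m" "(Inl (Suc 0),Suc 0) \<in> GV n m" "(Inr {0, Suc 0},Suc 0) \<in> GV n m"
    using edges_sub[OF eab0] edges_sub[OF eat0] edges_sub[OF eab1] edges_sub[OF eat1] by auto
  from orient_dir[OF o eaa] show ?thesis
  proof
    assume "((Inl 0,0),(Inl 0,Suc 0)) \<in> A"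
    from tri[OF o f eab0 eat0 ebt0 _ _ _ this] inV show ?thesis by auto
  next
    assume "((Inl 0,Suc 0),(Inl 0,0)) \<in> A"
    from tri[OF o f eab1 eat1 ebt1 _ _ _ this] inV show ?thesis by auto
  qed
qed

theorem corollary3p7:
  fixes n m :: nat
  assumes "n \<ge> 2" and "m \<ge> 2"
  shows "AT (RP_verts (path_verts n) (path_edges n) (path_verts m))
            (RP_edges (path_verts n) (path_edges n) (path_verts m) (path_edges m)) = 3"
proof -
  define A where "A = {(x,y). {x,y} \<in> GE n m \<and> rk n m y < rk n m x}"
  have h1: "\<forall>e\<in>GE n m. \<exists>x y. e = {x,y}" unfolding RP_edges_def by blast
  have o: "is_orientation (GV n m) (GE n m) A" unfolding A_def
    by (rule rank_orient) (use h1 rk_ne in auto)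
  have "A \<subseteq> GV n m \<times> GV n m"
  proof
    fix z assume z: "z \<in> A"
    obtain x y where xy: "z = (x,y)" by (cases z)
    then have "{x,y} \<in> GE n m" using z unfolding A_def by auto
    then show "z \<in> GV n m \<times> GV n m" using edges_sub xy by blast
  qed
  then have finA: "finite A" using fin_V finite_subset by blast
  have at: "AT_orientation A" by (rule acyc_AT[OF finA, of "rk n m"]) (auto simp: A_def)
  have od: "outdeg A v + 1 \<le> 3" for v
  proof -
    have "outdeg A v = card {w. {v,w} \<in> GE n m \<and> rk n m w < rk n m v}"
      by (simp add: outdeg_def A_def)
    then show ?thesis using out_le2[of v n m] by simp
  qed
  have P3: "\<exists>A. is_orientation (GV n m) (GE n m) A \<and> AT_orientation A \<and> (\<forall>v\<in>GV n m. outdeg A v + 1 \<le> 3)"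
    using o at od by blast
  show ?thesis unfolding AT_def
  proof (rule Least_equality)
    show "\<exists>A. is_orientation (GV n m) (GE n m) A \<and> AT_orientation A \<and> (\<forall>v\<in>GV n m. outdeg A v + 1 \<le> 3)"
      by (rule P3)
  next
    fix k assume "\<exists>A. is_orientation (GV n m) (GE n m) A \<and> AT_orientation A \<and> (\<forall>v\<in>GV n m. outdeg A v + 1 \<le> k)"
    then obtain B where B: "is_orientation (GV n m) (GE n m) B" "\<forall>v\<in>GV n m. outdeg B v + 1 \<le> k" by blast
    from lower[OF assms B(1)] obtain v where "v \<in> GV n m" "2 \<le> outdeg B v" by blast
    with B(2) show "3 \<le> k" by fastforce
  qed
qed

end
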